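(* Let $n\ge3$ and $e_1,\dots,e_n\ge1$ be integers with $E=e_1\cdots e_n\ge2$. Let $p$ be a prime with $p>\max\{e_1,\dots,e_n\}$ such that the only solution of $x^{E-1}=1$ in $\mathbf F_p$ is $x=1$. Then the action of $G=G_{\mathbf F_p,n;e_1,\dots,e_n}$ on $\mathbf F_p^n$ fixes $0$ and is $(p-1)$-transitive on $\mathbf F_p^n\setminus\{0\}$.
   Context: $R_n=\mathbf F_p[x_1,\dots,x_n]$; $\alpha_{i;j}^{(e)}(r)\in\mathrm{Aut}(R_n)$ maps $x_i\mapsto x_i+rx_j^e$ and fixes other variables; $G_{\mathbf F_p,n;e_1,\dots,e_n}$ is generated by $\alpha_{i;i+1}^{(e_i)}(1)$, $1\le i\le n$, indices modulo $n$. For a commutative $\mathbf F_p$-algebra $A$, $\mathrm{Aut}(R_n)$ acts on $A^n$ (identified with $\mathrm{Hom}_{\mathbf F_p\text{-alg}}(R_n,A)$ via $\phi\mapsto(\phi(x_1),\dots,\phi(x_n))$) by $\phi\mapsto\phi\circ g^{-1}$; i.e. $g$ sends $a=(a_1,\dots,a_n)$ to $\big(g^{-1}(x_1)(a),\dots,g^{-1}(x_n)(a)\big)$. *)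

theory Defs
  imports "HOL-Number_Theory.Number_Theory"
begin

text \<open>Points of F_p^n are functions nat => int, coordinates 0..n-1 (0-based) taking values
in {0..<p}, and 0 outside {0..<n}. Indices are taken modulo n.\<close>

definition Fpn :: "nat \<Rightarrow> nat \<Rightarrow> (nat \<Rightarrow> int) set" where
  "Fpn p n = {a. (\<forall>i<n. 0 \<le> a i \<and> a i < int p) \<and> (\<forall>i\<ge>n. a i = 0)}"

definition zeroPt :: "nat \<Rightarrow> int" where
  "zeroPt = (\<lambda>_. 0)"

text \<open>Action of the generator alpha_{i;i+1}^{(e_i)}(1) on points: since
 alpha^{-1}(x_i) = x_i - x_{i+1}^{e_i}, the point a is sent to a with a_i replaced
 by a_i - a_{i+1}^{e_i} (mod p).\<close>

definition genAct :: "nat \<Rightarrow> nat \<Rightarrow> (nat \<Rightarrow> nat) \<Rightarrow> nat \<Rightarrow> (nat \<Rightarrow> int) \<Rightarrow> (nat \<Rightarrow> int)" where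
  "genAct p n e i a = a(i := (a i - a ((i + 1) mod n) ^ e i) mod int p)"

definition genActInv :: "nat \<Rightarrow> nat \<Rightarrow> (nat \<Rightarrow> nat) \<Rightarrow> nat \<Rightarrow> (nat \<Rightarrow> int) \<Rightarrow> (nat \<Rightarrow> int)" where
  "genActInv p n e i a = a(i := (a i + a ((i + 1) mod n) ^ e i) mod int p)"

text \<open>Image of G_{F_p,n;e} in the permutations of F_p^n: the group generated by the
 actions of the generators (all words in generators and their inverses).\<close>

inductive_set Gact :: "nat \<Rightarrow> nat \<Rightarrow> (nat \<Rightarrow> nat) \<Rightarrow> ((nat \<Rightarrow> int) \<Rightarrow> (nat \<Rightarrow> int)) set"
  for p n e where
  Gact_id: "id \<in> Gact p n e"
| Gact_gen: "g \<in> Gact p n e \<Longrightarrow> i < n \<Longrightarrow> genAct p n e i \<circ> g \<in> Gact p n e"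
| Gact_inv: "g \<in> Gact p n e \<Longrightarrow> i < n \<Longrightarrow> genActInv p n e i \<circ> g \<in> Gact p n e"

definition k_transitive_on :: "nat \<Rightarrow> ('a \<Rightarrow> 'a) set \<Rightarrow> 'a set \<Rightarrow> bool" where
  "k_transitive_on k G X \<longleftrightarrow>
     (\<forall>xs ys. length xs = k \<and> length ys = k \<and> distinct xs \<and> distinct ys \<and>
        set xs \<subseteq> X \<and> set ys \<subseteq> X \<longrightarrow> (\<exists>g\<in>G. map g xs = ys))"

end

theory Submission
  imports Defs
begin

lemma fermat_int:
  assumes p: "prime p"
  shows "[(x::int) ^ p = x] (mod int p)"
proof -
  define y where "y = nat (x mod int p)"
  have p0: "int p > 0" using p prime_gt_0_nat by auto
  have xy: "[x = int y] (mod int p)" unfolding y_def cong_def using p0 by simp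
  have "[y ^ p = y] (mod p)"
  proof (cases "p dvd y")
    case True
    then have A: "[y = 0] (mod p)" by (simp add: cong_0_iff)
    then have B: "[y ^ p = 0 ^ p] (mod p)" by (rule cong_pow)
    have "0 ^ p = (0::nat)" using prime_gt_0_nat[OF p] by (simp add: power_0_left)
    with B have B': "[y ^ p = 0] (mod p)" by metis
    show ?thesis using cong_trans[OF B' cong_sym[OF A]] .
  next
    case False
    then have "[y ^ (p - 1) = 1] (mod p)" by (rule fermat_theorem[OF p])
    then have "[y ^ (p - 1) * y = 1 * y] (mod p)" by (rule cong_mult) (rule cong_refl)
    moreover have "y ^ (p - 1) * y = y ^ p" using p prime_gt_0_nat
      by (metis Suc_diff_1 mult.commute power_Suc)
    ultimately show ?thesis by simp
  qed
  then have "[int y ^ p = int y] (mod int p)" by (metis cong_int_iff of_nat_power)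
  moreover have "[x ^ p = int y ^ p] (mod int p)" using xy by (simp add: cong_pow)
  ultimately show ?thesis using xy by (metis cong_sym cong_trans)
qed

lemma pow_shift:
  assumes p: "prime p" and m: "m \<ge> 1"
  shows "[(x::int) ^ (m + (p - 1)) = x ^ m] (mod int p)"
proof -
  have "m + (p - 1) = (m - 1) + p" using m prime_gt_1_nat[OF p] by linarith
  then have "x ^ (m + (p - 1)) = x ^ ((m - 1) + p)" by (rule arg_cong)
  also have "\<dots> = x ^ (m - 1) * x ^ p" by (rule power_add)
  also have "[x ^ (m - 1) * x ^ p = x ^ (m - 1) * x] (mod int p)"
    using fermat_int[OF p] by (intro cong_mult) auto
  also have "x ^ (m - 1) * x = x ^ m" using m
    by (cases m) (auto simp: mult.commute)
  finally show ?thesis .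
qed

definition red :: "nat \<Rightarrow> nat \<Rightarrow> nat" where
  "red p c = ((c - 1) mod (p - 1)) + 1"

lemma red_range:
  assumes p: "prime p"
  shows "1 \<le> red p c \<and> red p c \<le> p - 1"
proof -
  have "p - 1 > 0" using p prime_gt_1_nat by auto
  then show ?thesis unfolding red_def by (metis Suc_leI add.commute le_add1 mod_less_divisor plus_1_eq_Suc)
qed

lemma red_pow:
  assumes p: "prime p" and c: "c \<ge> 1"
  shows "[(x::int) ^ c = x ^ red p c] (mod int p)"
proof -
  have gen: "[(x::int) ^ (m + q * (p - 1)) = x ^ m] (mod int p)" if "m \<ge> 1" for m q
  proof (induction q)
    case 0 then show ?case by simp
  next
    case (Suc q)
    have e: "m + Suc q * (p - 1) = (m + q * (p - 1)) + (p - 1)" by simp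
    have "[x ^ ((m + q * (p - 1)) + (p - 1)) = x ^ (m + q * (p - 1))] (mod int p)"
      using pow_shift[OF p, of "m + q * (p - 1)" x] that by simp
    then have "[x ^ (m + Suc q * (p - 1)) = x ^ (m + q * (p - 1))] (mod int p)"
      by (subst e)
    then show ?case using Suc.IH by (rule cong_trans)
  qed
  have eq: "c = red p c + ((c - 1) div (p - 1)) * (p - 1)"
  proof -
    have "(c - 1) mod (p - 1) + (c - 1) div (p - 1) * (p - 1) = c - 1" by (rule mod_div_mult_eq)
    then show ?thesis unfolding red_def using c by linarith
  qed
  moreover have "[x ^ (red p c + ((c - 1) div (p - 1)) * (p - 1)) = x ^ red p c] (mod int p)"
    using gen red_range[OF p] by blast
  moreover have "x ^ c = x ^ (red p c + ((c - 1) div (p - 1)) * (p - 1))"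
    using eq by (rule arg_cong)
  ultimately show ?thesis by (metis (no_types))
qed

lemma red_cong:
  assumes c: "c \<ge> 1"
  shows "[red p c = c] (mod (p - 1))"
proof -
  have "[(c - 1) mod (p - 1) + 1 = (c - 1) + 1] (mod (p - 1))"
    by (intro cong_add) (simp_all add: cong_def)
  moreover have "(c - 1) + 1 = c" using c by simp
  ultimately show ?thesis unfolding red_def by simp
qed

lemma red_id:
  assumes "1 \<le> c" "c \<le> p - 1"
  shows "red p c = c"
proof -
  have "c - 1 < p - 1" using assms by linarith
  then have "(c - 1) mod (p - 1) = c - 1" by (rule mod_less)
  then show ?thesis unfolding red_def using assms by linarith
qed

lemma psum_dvd:
  assumes p: "prime p" and t: "(p - 1) dvd t"
  shows "[(\<Sum>d\<in>{1..<p}. d ^ t) = p - 1] (mod p)"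
proof -
  have "[(\<Sum>d\<in>{1..<p}. d ^ t) = (\<Sum>d\<in>{1..<p}. 1)] (mod p)"
  proof (rule cong_sum)
    fix d assume d: "d \<in> {1..<p}"
    then have "\<not> p dvd d" by (auto dest: dvd_imp_le)
    then have f: "[d ^ (p - 1) = 1] (mod p)" by (rule fermat_theorem[OF p])
    obtain k where k: "t = (p - 1) * k" using t by (auto elim: dvdE)
    have "d ^ t = (d ^ (p - 1)) ^ k" by (simp add: k power_mult)
    moreover have "[(d ^ (p - 1)) ^ k = 1 ^ k] (mod p)" using f by (rule cong_pow)
    ultimately show "[d ^ t = 1] (mod p)" by simp
  qed
  then show ?thesis by simp
qed

lemma psum_ndvd:
  assumes p: "prime p" and t: "\<not> (p - 1) dvd t"
  shows "p dvd (\<Sum>d\<in>{1..<p}. d ^ t)"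
proof -
  obtain c where c: "residue_primroot p c" using prime_primitive_root_exists[OF prime_gt_1_nat[OF p] p] by blast
  have p1: "p > 1" using prime_gt_1_nat[OF p] .
  have ordc: "ord p c = p - 1" using c p by (simp add: residue_primroot_def totient_prime)
  have cop: "coprime p c" using c by (simp add: residue_primroot_def)
  have nc: "\<not> [c ^ t = 1] (mod p)" using ord_divides'[of c t p] ordc t by simp
  define A where "A = {1..<p}"
  define f where "f d = (c * d) mod p" for d
  have pnc: "\<not> p dvd c" using cop p1 by (metis coprime_absorb_left nat_dvd_1_iff_1 not_less_iff_gr_or_eq)
  have inj: "inj_on f A"
  proof (rule inj_onI)
    fix x y assume x: "x \<in> A" and y: "y \<in> A" and e: "f x = f y"
    then have "[c * x = c * y] (mod p)" by (simp add: f_def cong_def)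
    then have "[x = y] (mod p)" using cop by (simp add: cong_mult_lcancel_nat coprime_commute)
    then show "x = y" using x y A_def by (auto intro: cong_less_modulus_unique_nat)
  qed
  have sub: "f ` A \<subseteq> A"
  proof
    fix z assume "z \<in> f ` A"
    then obtain d where d: "d \<in> A" and z: "z = f d" by auto
    have "\<not> p dvd d" using d A_def by (auto dest: dvd_imp_le)
    then have "\<not> p dvd c * d" using pnc p by (simp add: prime_dvd_mult_iff)
    then have "z \<noteq> 0" using z f_def by (auto simp: dvd_eq_mod_eq_0)
    moreover have "z < p" using z f_def p1 by simp
    ultimately show "z \<in> A" using A_def by auto
  qed
  have img: "f ` A = A" using endo_inj_surj[OF _ sub inj] A_def by simp
  define S where "S = (\<Sum>d\<in>A. d ^ t)"
  have "S = (\<Sum>d\<in>f ` A. d ^ t)" using img S_def by simp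
  also have "\<dots> = (\<Sum>d\<in>A. (f d) ^ t)" using inj by (simp add: sum.reindex)
  finally have S1: "S = (\<Sum>d\<in>A. (f d) ^ t)" .
  have "[(\<Sum>d\<in>A. (f d) ^ t) = (\<Sum>d\<in>A. c ^ t * d ^ t)] (mod p)"
  proof (rule cong_sum)
    fix d
    have "[(c * d) mod p = c * d] (mod p)" by (simp add: cong_def)
    then have "[((c * d) mod p) ^ t = (c * d) ^ t] (mod p)" by (rule cong_pow)
    then show "[(f d) ^ t = c ^ t * d ^ t] (mod p)" by (simp add: f_def power_mult_distrib)
  qed
  then have T: "[(\<Sum>d\<in>A. (f d) ^ t) = c ^ t * S] (mod p)" by (simp add: S_def sum_distrib_left)
  have "[S = c ^ t * S] (mod p)" by (subst (1) S1) (rule T)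
  then have "[int S = int (c ^ t) * int S] (mod int p)" by (metis cong_int_iff of_nat_mult)
  then have "int p dvd (int (c ^ t) - 1) * int S"
    by (simp add: cong_iff_dvd_diff algebra_simps dvd_diff_commute)
  moreover have "\<not> int p dvd (int (c ^ t) - 1)"
  proof
    assume "int p dvd (int (c ^ t) - 1)"
    then have "[int (c ^ t) = int 1] (mod int p)" by (simp add: cong_iff_dvd_diff)
    then have "[c ^ t = 1] (mod p)" by (metis cong_int_iff)
    then show False using nc by simp
  qed
  moreover have "prime (int p)" using p by simp
  ultimately have "int p dvd int S" using prime_dvd_mult_iff by blast
  then have "p dvd S" by (simp only: int_dvd_int_iff)
  then show ?thesis using S_def A_def by simp
qed

lemma psum_int:
  assumes p: "prime p"
  shows "[(\<Sum>d\<in>{1..<p}. (int d) ^ t) = (if (p - 1) dvd t then -1 else 0)] (mod int p)"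
proof (cases "(p - 1) dvd t")
  case True
  have "[int (\<Sum>d\<in>{1..<p}. d ^ t) = int (p - 1)] (mod int p)"
    using psum_dvd[OF p True] by (simp only: cong_int_iff)
  moreover have "int (\<Sum>d\<in>{1..<p}. d ^ t) = (\<Sum>d\<in>{1..<p}. (int d) ^ t)" by simp
  ultimately have A: "[(\<Sum>d\<in>{1..<p}. (int d) ^ t) = int (p - 1)] (mod int p)" by simp
  moreover have "int (p - 1) = int p + (- 1)" using prime_gt_1_nat[OF p] by simp
  moreover have "[int p + (-1) = 0 + (-1)] (mod int p)" by (intro cong_add) (auto simp: cong_def)
  ultimately have "[int (p - 1) = -1] (mod int p)" by simp
  with A True show ?thesis using cong_trans by fastforce
next
  case False
  have "int p dvd int (\<Sum>d\<in>{1..<p}. d ^ t)" using psum_ndvd[OF p False] by (simp only: int_dvd_int_iff)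
  moreover have "int (\<Sum>d\<in>{1..<p}. d ^ t) = (\<Sum>d\<in>{1..<p}. (int d) ^ t)" by simp
  ultimately have "int p dvd (\<Sum>d\<in>{1..<p}. (int d) ^ t)" by simp
  then show ?thesis using False by (simp add: cong_0_iff)
qed

lemma coprime_from_hyp:
  assumes p: "prime p" and E: "E \<ge> 2"
    and H: "\<forall>x::int. 0 \<le> x \<and> x < int p \<and> [x ^ (E - 1) = 1] (mod int p) \<longrightarrow> x = 1"
  shows "coprime (E - 1) (p - 1)"
proof (rule ccontr)
  assume nc: "\<not> coprime (E - 1) (p - 1)"
  define d where "d = gcd (E - 1) (p - 1)"
  have p1: "p > 1" using prime_gt_1_nat[OF p] .
  have d1: "d \<noteq> 1" using nc unfolding d_def coprime_iff_gcd_eq_1 .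
  have "E - 1 \<noteq> 0" using E by linarith
  then have dpos: "d > 0" unfolding d_def by simp
  have d2: "d \<ge> 2" using d1 dpos by linarith
  have dd1: "d dvd p - 1" unfolding d_def by (rule gcd_dvd2)
  have dd2: "d dvd E - 1" unfolding d_def by (rule gcd_dvd1)
  obtain l where l: "p - 1 = d * l" using dd1 by (elim dvdE)
  obtain k where k: "E - 1 = d * k" using dd2 by (elim dvdE)
  obtain c where c: "residue_primroot p c" using prime_primitive_root_exists[OF prime_gt_1_nat[OF p] p] by blast
  have ordc: "ord p c = p - 1" using c p by (simp add: residue_primroot_def totient_prime)
  have lpos: "l > 0" using l p1 by (cases "l = 0") auto
  have "2 * l \<le> d * l" using d2 by (rule mult_right_mono) simp
  then have llt: "l < p - 1" using l lpos by linarith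
  define x where "x = (c ^ l) mod p"
  have X1: "[x ^ (E - 1) = (c ^ l) ^ (E - 1)] (mod p)" unfolding x_def by (intro cong_pow) (simp add: cong_def)
  have X2: "(c ^ l) ^ (E - 1) = (c ^ (p - 1)) ^ k"
  proof -
    have "l * (E - 1) = (p - 1) * k" using l k by simp
    then show ?thesis by (simp add: power_mult[symmetric])
  qed
  have "[c ^ (p - 1) = 1] (mod p)" using ord_divides'[of c "p - 1" p] ordc by simp
  then have X3: "[(c ^ (p - 1)) ^ k = 1 ^ k] (mod p)" by (rule cong_pow)
  have "[x ^ (E - 1) = 1] (mod p)" using cong_trans[OF X1 X3[folded X2]] by simp
  then have "[int (x ^ (E - 1)) = int 1] (mod int p)" by (simp only: cong_int_iff)
  then have "[int x ^ (E - 1) = 1] (mod int p)" by simp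
  moreover have "int x < int p" using x_def p1 by simp
  ultimately have "int x = 1" using H[rule_format, of "int x"] by simp
  then have "x = 1" by simp
  then have "[c ^ l = 1] (mod p)" using x_def p1 by (simp add: cong_def)
  then have "ord p c dvd l" using ord_divides'[of c l p] by simp
  then have "p - 1 \<le> l" using ordc lpos by (metis dvd_imp_le)
  then show False using llt by simp
qed

locale gctx =
  fixes p n :: nat and e :: "nat \<Rightarrow> nat"
  assumes n3: "n \<ge> 3" and e1: "\<forall>i<n. e i \<ge> 1" and pp: "prime p" and elt: "\<forall>i<n. e i < p"
begin

abbreviation "F \<equiv> Fpn p n"
abbreviation "G \<equiv> Gact p n e"

definition N :: "nat \<Rightarrow> nat" where "N i = (i + 1) mod n"

definition EE :: "nat \<Rightarrow> ((nat \<Rightarrow> int) \<Rightarrow> int) \<Rightarrow> (nat \<Rightarrow> int) \<Rightarrow> (nat \<Rightarrow> int)" where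
  "EE i h a = a(i := (a i + h a) mod int p)"

definition indep :: "nat \<Rightarrow> ((nat \<Rightarrow> int) \<Rightarrow> int) \<Rightarrow> bool" where
  "indep i h \<longleftrightarrow> (\<forall>a\<in>F. \<forall>v. 0 \<le> v \<and> v < int p \<longrightarrow> [h (a(i := v)) = h a] (mod int p))"

definition R :: "nat \<Rightarrow> ((nat \<Rightarrow> int) \<Rightarrow> int) \<Rightarrow> bool" where
  "R i h \<longleftrightarrow> i < n \<and> indep i h \<and> (\<exists>g\<in>G. \<forall>a\<in>F. g a = EE i h a)"

lemma p0: "int p > 0" using prime_gt_0_nat[OF pp] by simp
lemma p1: "p > 1" using prime_gt_1_nat[OF pp] .

lemma N_lt: "N i < n" using n3 by (simp add: N_def)
lemma N_neq: "i < n \<Longrightarrow> N i \<noteq> i"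
proof -
  assume i: "i < n"
  show ?thesis
  proof (cases "i + 1 < n")
    case True then show ?thesis by (simp add: N_def)
  next
    case False
    then have "i + 1 = n" using i by simp
    then show ?thesis using n3 by (simp add: N_def)
  qed
qed

lemma F_val: "a \<in> F \<Longrightarrow> 0 \<le> a j \<and> a j < int p"
  using p0 unfolding Fpn_def by (cases "j < n") auto

lemma F_upd: "a \<in> F \<Longrightarrow> i < n \<Longrightarrow> 0 \<le> v \<Longrightarrow> v < int p \<Longrightarrow> a(i := v) \<in> F"
  unfolding Fpn_def by auto

lemma mod_range: "0 \<le> x mod int p \<and> x mod int p < int p"
  using p0 by simp

lemma EE_F: "a \<in> F \<Longrightarrow> i < n \<Longrightarrow> EE i h a \<in> F"
  unfolding EE_def using F_upd mod_range by auto

lemma genAct_F: "a \<in> F \<Longrightarrow> i < n \<Longrightarrow> genAct p n e i a \<in> F"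
  unfolding genAct_def using F_upd mod_range by auto

lemma genActInv_F: "a \<in> F \<Longrightarrow> i < n \<Longrightarrow> genActInv p n e i a \<in> F"
  unfolding genActInv_def using F_upd mod_range by auto

lemma Gact_F: "g \<in> G \<Longrightarrow> a \<in> F \<Longrightarrow> g a \<in> F"
  by (induction g rule: Gact.induct) (auto intro: genAct_F genActInv_F)

lemma Gact_comp: "g1 \<in> G \<Longrightarrow> g2 \<in> G \<Longrightarrow> g1 \<circ> g2 \<in> G"
proof (induction g1 rule: Gact.induct)
  case Gact_id then show ?case by simp
next
  case (Gact_gen g i)
  have eq: "(genAct p n e i \<circ> g) \<circ> g2 = genAct p n e i \<circ> (g \<circ> g2)" by (simp add: comp_assoc)
  have "g \<circ> g2 \<in> G" using Gact_gen by blast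
  then have "genAct p n e i \<circ> (g \<circ> g2) \<in> G" using Gact_gen(2) by (rule Gact.Gact_gen)
  then show ?case unfolding eq .
next
  case (Gact_inv g i)
  have eq: "(genActInv p n e i \<circ> g) \<circ> g2 = genActInv p n e i \<circ> (g \<circ> g2)" by (simp add: comp_assoc)
  have "g \<circ> g2 \<in> G" using Gact_inv by blast
  then have "genActInv p n e i \<circ> (g \<circ> g2) \<in> G" using Gact_inv(2) by (rule Gact.Gact_inv)
  then show ?case unfolding eq .
qed

lemma inv_gen: "b \<in> F \<Longrightarrow> i < n \<Longrightarrow> genActInv p n e i (genAct p n e i b) = b"
proof -
  assume b: "b \<in> F" and i: "i < n"
  have ni: "(i + 1) mod n \<noteq> i" using N_neq[OF i] by (simp add: N_def)
  have "((b i - b ((i + 1) mod n) ^ e i) mod int p + b ((i + 1) mod n) ^ e i) mod int p = b i mod int p"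
    by (simp add: mod_add_left_eq)
  also have "\<dots> = b i" using F_val[OF b, of i] by simp
  finally show ?thesis using ni unfolding genAct_def genActInv_def by simp
qed

lemma gen_inv: "b \<in> F \<Longrightarrow> i < n \<Longrightarrow> genAct p n e i (genActInv p n e i b) = b"
proof -
  assume b: "b \<in> F" and i: "i < n"
  have ni: "(i + 1) mod n \<noteq> i" using N_neq[OF i] by (simp add: N_def)
  have "((b i + b ((i + 1) mod n) ^ e i) mod int p - b ((i + 1) mod n) ^ e i) mod int p = b i mod int p"
    by (simp add: mod_diff_left_eq)
  also have "\<dots> = b i" using F_val[OF b, of i] by simp
  finally show ?thesis using ni unfolding genAct_def genActInv_def by simp
qed

lemma Gact_inv_ex: "g \<in> G \<Longrightarrow> \<exists>g'\<in>G. \<forall>a\<in>F. g' (g a) = a"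
proof (induction g rule: Gact.induct)
  case Gact_id then show ?case using Gact.Gact_id[of p n e] by (intro bexI[of _ id]) auto
next
  case (Gact_gen g i)
  then obtain g' where g': "g' \<in> G" "\<forall>a\<in>F. g' (g a) = a" by blast
  have "genActInv p n e i \<circ> id \<in> G" using Gact.Gact_inv[OF Gact.Gact_id Gact_gen(2)] .
  then have "g' \<circ> (genActInv p n e i \<circ> id) \<in> G" using g'(1) Gact_comp by blast
  moreover have "\<forall>a\<in>F. (g' \<circ> (genActInv p n e i \<circ> id)) ((genAct p n e i \<circ> g) a) = a"
  proof
    fix a assume a: "a \<in> F"
    have "g a \<in> F" using Gact_F[OF Gact_gen(1) a] .
    then show "(g' \<circ> (genActInv p n e i \<circ> id)) ((genAct p n e i \<circ> g) a) = a"
      using inv_gen[OF _ Gact_gen(2)] g'(2) a by simp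
  qed
  ultimately show ?case by blast
next
  case (Gact_inv g i)
  then obtain g' where g': "g' \<in> G" "\<forall>a\<in>F. g' (g a) = a" by blast
  have "genAct p n e i \<circ> id \<in> G" using Gact.Gact_gen[OF Gact.Gact_id Gact_inv(2)] .
  then have "g' \<circ> (genAct p n e i \<circ> id) \<in> G" using g'(1) Gact_comp by blast
  moreover have "\<forall>a\<in>F. (g' \<circ> (genAct p n e i \<circ> id)) ((genActInv p n e i \<circ> g) a) = a"
  proof
    fix a assume a: "a \<in> F"
    have "g a \<in> F" using Gact_F[OF Gact_inv(1) a] .
    then show "(g' \<circ> (genAct p n e i \<circ> id)) ((genActInv p n e i \<circ> g) a) = a"
      using gen_inv[OF _ Gact_inv(2)] g'(2) a by simp
  qed
  ultimately show ?case by blast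
qed

lemma Gact_zero: "g \<in> G \<Longrightarrow> g zeroPt = zeroPt"
proof (induction g rule: Gact.induct)
  case Gact_id then show ?case by simp
next
  case (Gact_gen g i)
  have "e i \<ge> 1" using e1 Gact_gen by auto
  then have "(0::int) ^ e i = 0" by simp
  then show ?case using Gact_gen unfolding genAct_def zeroPt_def by (auto simp: fun_upd_idem power_0_left)
next
  case (Gact_inv g i)
  have "e i \<ge> 1" using e1 Gact_inv by auto
  then have "(0::int) ^ e i = 0" by simp
  then show ?case using Gact_inv unfolding genActInv_def zeroPt_def by (auto simp: fun_upd_idem power_0_left)
qed

end

context gctx begin

lemma EE_cong: "[h a = h' a] (mod int p) \<Longrightarrow> EE i h a = EE i h' a"
proof -
  assume c: "[h a = h' a] (mod int p)"
  have "[a i + h a = a i + h' a] (mod int p)" using c by (intro cong_add cong_refl)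
  then show ?thesis unfolding EE_def cong_def by simp
qed

lemma EE_comp:
  assumes a: "a \<in> F" and i: "i < n" and ind: "indep i h1"
  shows "EE i h1 (EE i h2 a) = EE i (\<lambda>a. h1 a + h2 a) a"
proof -
  define w where "w = (a i + h2 a) mod int p"
  have w: "0 \<le> w" "w < int p" using mod_range w_def by auto
  have "[h1 (a(i := w)) = h1 a] (mod int p)" using ind a w unfolding indep_def by blast
  then have "[w + h1 (a(i := w)) = (a i + h2 a) + h1 a] (mod int p)"
    unfolding w_def by (intro cong_add) (auto simp: cong_def)
  then have "(w + h1 (a(i := w))) mod int p = (a i + (h1 a + h2 a)) mod int p"
    unfolding cong_def by (simp add: algebra_simps)
  then show ?thesis unfolding EE_def w_def[symmetric] by simp
qed

lemma EE_zero: "a \<in> F \<Longrightarrow> EE i (\<lambda>a. 0) a = a"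
  unfolding EE_def using F_val by simp

lemma R_gen: "i < n \<Longrightarrow> R i (\<lambda>a. a (N i) ^ e i)"
proof -
  assume i: "i < n"
  have "genActInv p n e i \<circ> id \<in> G" using Gact.Gact_inv[OF Gact.Gact_id i] .
  moreover have "\<forall>a\<in>F. (genActInv p n e i \<circ> id) a = EE i (\<lambda>a. a (N i) ^ e i) a"
    unfolding genActInv_def EE_def N_def by simp
  moreover have "indep i (\<lambda>a. a (N i) ^ e i)"
    unfolding indep_def using N_neq[OF i] by (simp add: cong_refl)
  ultimately show ?thesis unfolding R_def using i by blast
qed

lemma R_zero: "i < n \<Longrightarrow> R i (\<lambda>a. 0)"
  unfolding R_def indep_def using Gact.Gact_id[of p n e] EE_zero by (auto intro!: bexI[of _ id])

lemma R_add:
  assumes "R i h1" "R i h2"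
  shows "R i (\<lambda>a. h1 a + h2 a)"
proof -
  from assms obtain g1 g2 where i: "i < n" and ind1: "indep i h1" and ind2: "indep i h2"
    and g1: "g1 \<in> G" "\<forall>a\<in>F. g1 a = EE i h1 a" and g2: "g2 \<in> G" "\<forall>a\<in>F. g2 a = EE i h2 a"
    unfolding R_def by blast
  have "g1 \<circ> g2 \<in> G" using g1 g2 Gact_comp by blast
  moreover have "\<forall>a\<in>F. (g1 \<circ> g2) a = EE i (\<lambda>a. h1 a + h2 a) a"
    using g1 g2 EE_F EE_comp[OF _ i ind1] i by simp
  moreover have "indep i (\<lambda>a. h1 a + h2 a)"
    using ind1 ind2 unfolding indep_def by (blast intro: cong_add)
  ultimately show ?thesis unfolding R_def using i by blast
qed

lemma R_cong:
  assumes "R i h" "\<forall>a\<in>F. [h' a = h a] (mod int p)"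
  shows "R i h'"
proof -
  from assms obtain g where i: "i < n" and ind: "indep i h"
    and g: "g \<in> G" "\<forall>a\<in>F. g a = EE i h a"
    unfolding R_def by blast
  have "\<forall>a\<in>F. g a = EE i h' a"
    using g assms(2) EE_cong by (metis cong_sym)
  moreover have "indep i h'"
    unfolding indep_def
  proof (intro ballI allI impI)
    fix a v assume a: "a \<in> F" and v: "0 \<le> v \<and> v < int p"
    have "a(i := v) \<in> F" using F_upd a i v by auto
    then have "[h' (a(i := v)) = h (a(i := v))] (mod int p)" using assms(2) by blast
    also have "[h (a(i := v)) = h a] (mod int p)" using ind a v unfolding indep_def by blast
    also have "[h a = h' a] (mod int p)" using assms(2) a by (simp add: cong_sym)
    finally show "[h' (a(i := v)) = h' a] (mod int p)" .
  qed
  ultimately show ?thesis unfolding R_def using i g by blast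
qed

lemma R_neg:
  assumes "R i h"
  shows "R i (\<lambda>a. - h a)"
proof -
  from assms obtain g where i: "i < n" and ind: "indep i h"
    and g: "g \<in> G" "\<forall>a\<in>F. g a = EE i h a"
    unfolding R_def by blast
  obtain g' where g': "g' \<in> G" "\<forall>a\<in>F. g' (g a) = a" using Gact_inv_ex[OF g(1)] by blast
  have "\<forall>a\<in>F. g' a = EE i (\<lambda>a. - h a) a"
  proof
    fix a assume a: "a \<in> F"
    have b: "EE i (\<lambda>a. - h a) a \<in> F" using EE_F a i by blast
    have "g (EE i (\<lambda>a. - h a) a) = EE i h (EE i (\<lambda>a. - h a) a)" using g b by blast
    also have "\<dots> = EE i (\<lambda>a. h a + - h a) a" using EE_comp[OF a i ind] .
    also have "\<dots> = a" using EE_zero[OF a] by simp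
    finally show "g' a = EE i (\<lambda>a. - h a) a" using g'(2) b by metis
  qed
  moreover have "indep i (\<lambda>a. - h a)"
    using ind unfolding indep_def by (blast intro: cong_minus_minus_iff[THEN iffD2])
  ultimately show ?thesis unfolding R_def using i g' by blast
qed

lemma R_diff: "R i h1 \<Longrightarrow> R i h2 \<Longrightarrow> R i (\<lambda>a. h1 a - h2 a)"
  using R_add[OF _ R_neg] by simp

lemma R_smult_nat: "R i h \<Longrightarrow> R i (\<lambda>a. int k * h a)"
proof (induction k)
  case 0 then show ?case using R_zero R_def by simp
next
  case (Suc k)
  have "R i (\<lambda>a. h a + int k * h a)" using R_add Suc by blast
  then show ?case by (simp add: algebra_simps)
qed

lemma R_smult: "R i h \<Longrightarrow> R i (\<lambda>a. c * h a)"
proof (cases "c \<ge> 0")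
  case True
  assume "R i h"
  then have "R i (\<lambda>a. int (nat c) * h a)" by (rule R_smult_nat)
  then show ?thesis using True by simp
next
  case False
  assume "R i h"
  then have "R i (\<lambda>a. - (int (nat (- c)) * h a))" by (intro R_neg R_smult_nat)
  then show ?thesis using False by simp
qed

lemma R_sum: "finite S \<Longrightarrow> i < n \<Longrightarrow> (\<And>s. s \<in> S \<Longrightarrow> R i (h s)) \<Longrightarrow> R i (\<lambda>a. \<Sum>s\<in>S. h s a)"
proof (induction S rule: finite_induct)
  case empty then show ?case using R_zero by simp
next
  case (insert x S)
  have "R i (\<lambda>a. h x a + (\<Sum>s\<in>S. h s a))" using insert R_add by blast
  then show ?case using insert by simp
qed

end

context gctx begin

lemma ind_app: "indep i h \<Longrightarrow> a \<in> F \<Longrightarrow> 0 \<le> v \<Longrightarrow> v < int p \<Longrightarrow> [h (a(i := v)) = h a] (mod int p)"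
  unfolding indep_def by blast

lemma R_real: "R i h \<Longrightarrow> \<exists>g\<in>G. \<forall>a\<in>F. g a = EE i h a"
  unfolding R_def by blast

lemma R_comm:
  assumes f: "R i f" and g: "R j g" and ij: "i \<noteq> j" and gi: "indep i g"
  shows "R i (\<lambda>a. f a - f (EE j g a))"
proof -
  have i: "i < n" and indf: "indep i f" using f unfolding R_def by auto
  have j: "j < n" and indg: "indep j g" using g unfolding R_def by auto
  obtain gf where gf: "gf \<in> G" "\<forall>a\<in>F. gf a = EE i f a" using R_real[OF f] by blast
  obtain gf' where gf': "gf' \<in> G" "\<forall>a\<in>F. gf' a = EE i (\<lambda>a. - f a) a" using R_real[OF R_neg[OF f]] by blast
  obtain gg where gg: "gg \<in> G" "\<forall>a\<in>F. gg a = EE j g a" using R_real[OF g] by blast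
  obtain gg' where gg': "gg' \<in> G" "\<forall>a\<in>F. gg' a = EE j (\<lambda>a. - g a) a" using R_real[OF R_neg[OF g]] by blast
  have comp: "gf \<circ> gg' \<circ> gf' \<circ> gg \<in> G" using Gact_comp[OF Gact_comp[OF Gact_comp[OF gf(1) gg'(1)] gf'(1)] gg(1)] .
  have act: "(gf \<circ> gg' \<circ> gf' \<circ> gg) a = EE i (\<lambda>a. f a - f (EE j g a)) a" if a: "a \<in> F" for a
  proof -
    define w1 where "w1 = (a j + g a) mod int p"
    have w1: "0 \<le> w1" "w1 < int p" using mod_range w1_def by auto
    define a1 where "a1 = a(j := w1)"
    have a1: "a1 \<in> F" "gg a = a1" using gg a EE_F j unfolding a1_def w1_def EE_def by auto
    define w2 where "w2 = (a i + - f a1) mod int p"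
    have w2: "0 \<le> w2" "w2 < int p" using mod_range w2_def by auto
    define a2 where "a2 = a(i := w2, j := w1)"
    have "gf' a1 = a1(i := (a1 i + - f a1) mod int p)" using gf' a1 unfolding EE_def by simp
    also have "\<dots> = a2" unfolding a1_def a2_def w2_def using ij by (simp add: fun_upd_twist)
    finally have a2e: "gf' a1 = a2" .
    have ai2: "a(i := w2) \<in> F" using F_upd a i w2 by auto
    have a2F: "a2 \<in> F" using F_upd[OF ai2 j w1] a2_def by simp
    have "[g a2 = g (a(i := w2))] (mod int p)" unfolding a2_def using ind_app[OF indg ai2 w1] .
    also have "[g (a(i := w2)) = g a] (mod int p)" using ind_app[OF gi a w2] .
    finally have ga2: "[g a2 = g a] (mod int p)" .
    have "[w1 + - g a2 = (a j + g a) + - g a] (mod int p)"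
      unfolding w1_def by (intro cong_add cong_minus_minus_iff[THEN iffD2] ga2) (simp add: cong_def)
    then have "(w1 + - g a2) mod int p = a j mod int p" by (simp add: cong_def)
    also have "\<dots> = a j" using F_val[OF a, of j] by simp
    finally have wj: "(w1 + - g a2) mod int p = a j" .
    have "gg' a2 = a2(j := (a2 j + - g a2) mod int p)" using gg' a2F unfolding EE_def by simp
    also have "\<dots> = a(i := w2)" using wj ij unfolding a2_def by (auto simp: fun_eq_iff)
    finally have a3e: "gg' a2 = a(i := w2)" .
    have fa3: "[f (a(i := w2)) = f a] (mod int p)" using ind_app[OF indf a w2] .
    have "gf (a(i := w2)) = (a(i := w2))(i := (w2 + f (a(i := w2))) mod int p)"
      using gf ai2 unfolding EE_def by simp
    also have "(w2 + f (a(i := w2))) mod int p = (a i + (f a - f a1)) mod int p"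
    proof -
      have h1: "[w2 = a i + - f a1] (mod int p)" unfolding w2_def by (simp add: cong_def)
      have "[w2 + f (a(i := w2)) = (a i + - f a1) + f a] (mod int p)"
        using cong_add[OF h1 fa3] .
      then show ?thesis by (simp add: cong_def algebra_simps)
    qed
    finally have "gf (a(i := w2)) = a(i := (a i + (f a - f a1)) mod int p)" by (simp only: fun_upd_upd)
    moreover have "EE j g a = a1" using a1 gg a by simp
    ultimately show ?thesis using a1 a2e a3e unfolding EE_def by simp
  qed
  have ind: "indep i (\<lambda>a. f a - f (EE j g a))"
    unfolding indep_def
  proof (intro ballI allI impI)
    fix a v assume a: "a \<in> F" and v: "0 \<le> v \<and> v < int p"
    have "[g (a(i := v)) = g a] (mod int p)" using ind_app[OF gi a] v by auto
    then have "(a j + g (a(i := v))) mod int p = (a j + g a) mod int p"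
      by (metis cong_add cong_def cong_refl)
    then have "EE j g (a(i := v)) = (EE j g a)(i := v)" unfolding EE_def using ij by (simp add: fun_upd_twist)
    moreover have "EE j g a \<in> F" using EE_F a j by blast
    ultimately have c1: "[f (EE j g (a(i := v))) = f (EE j g a)] (mod int p)" using ind_app[OF indf] v by auto
    have c2: "[f (a(i := v)) = f a] (mod int p)" using ind_app[OF indf a] v by auto
    show "[f (a(i := v)) - f (EE j g (a(i := v))) = f a - f (EE j g a)] (mod int p)"
      using c1 c2 by (rule cong_diff[rotated])
  qed
  show ?thesis unfolding R_def using i ind comp act by blast
qed

end

lemma binom_split:
  fixes x z :: int
  shows "(x + z) ^ b = x ^ b + (\<Sum>m\<in>{1..b}. of_nat (b choose m) * x ^ (b - m) * z ^ m)"
proof -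
  have "(z + x) ^ b = (\<Sum>m\<le>b. of_nat (b choose m) * z ^ m * x ^ (b - m))"
    by (rule binomial_ring)
  also have "{..b} = insert 0 {1..b}" by auto
  also have "(\<Sum>m\<in>insert 0 {1..b}. of_nat (b choose m) * z ^ m * x ^ (b - m)) =
      x ^ b + (\<Sum>m\<in>{1..b}. of_nat (b choose m) * z ^ m * x ^ (b - m))"
    by (subst sum.insert) auto
  finally show ?thesis by (simp add: add.commute mult.commute mult.left_commute)
qed

lemma choose_not_dvd:
  assumes p: "prime p" and b: "b < p" and k: "k \<le> b"
  shows "\<not> p dvd (b choose k)"
proof
  assume "p dvd (b choose k)"
  then have "p dvd fact k * fact (b - k) * (b choose k)" by simp
  then have "p dvd fact b" using binomial_fact_lemma[OF k] by metis
  then show False using prime_dvd_fact_iff[OF p] b by simp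
qed

context gctx begin

lemma R_subst:
  assumes i: "i < n" and j: "j < n" and ij: "i \<noteq> j"
    and f: "R i f" and fr: "\<forall>a\<in>F. [f a = r a * (a j) ^ b] (mod int p)"
    and b: "1 \<le> b" "b \<le> p - 1" and k: "1 \<le> k" "k \<le> b"
    and rj: "indep j r" and ri: "indep i r"
    and g: "R j g" and gi: "indep i g"
  shows "R i (\<lambda>a. r a * a j ^ (b - k) * g a ^ k)"
proof -
  define gd where "gd d = (\<lambda>a. int d * g a)" for d :: nat
  define C where "C d = (\<lambda>a. f a - f (EE j (gd d) a))" for d
  have gdR: "R j (gd d)" for d unfolding gd_def using g by (rule R_smult)
  have gdi: "indep i (gd d)" for d
    using gi unfolding indep_def gd_def by (blast intro: cong_scalar_left)
  have CR: "R i (C d)" for d unfolding C_def by (rule R_comm[OF f gdR ij gdi])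
  define q where "q = p - 1 - k"
  define H where "H = (\<lambda>a. \<Sum>d\<in>{1..<p}. int d ^ q * C d a)"
  have HR: "R i H" unfolding H_def by (rule R_sum) (auto intro: R_smult CR i)
  define T where "T m a = r a * of_nat (b choose m) * a j ^ (b - m) * g a ^ m" for m a
  have claim1: "[C d a = - (\<Sum>m\<in>{1..b}. T m a * int d ^ m)] (mod int p)" if a: "a \<in> F" for d a
  proof -
    define y where "y = a j + int d * g a"
    have ee: "EE j (gd d) a = a(j := y mod int p)" unfolding EE_def gd_def y_def by simp
    have eeF: "EE j (gd d) a \<in> F" using EE_F a j by blast
    have c1': "[f (EE j (gd d) a) = r (EE j (gd d) a) * ((EE j (gd d) a) j) ^ b] (mod int p)"
      using fr eeF by blast
    have ej: "(EE j (gd d) a) j = y mod int p" using ee by simp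
    have c1: "[f (EE j (gd d) a) = r (EE j (gd d) a) * (y mod int p) ^ b] (mod int p)"
      using c1' unfolding ej .
    have c2: "[r (EE j (gd d) a) = r a] (mod int p)" unfolding ee using ind_app[OF rj a] mod_range by blast
    have c3: "[(y mod int p) ^ b = y ^ b] (mod int p)" by (intro cong_pow) (simp add: cong_def)
    have c4: "[f (EE j (gd d) a) = r a * y ^ b] (mod int p)"
      using cong_trans[OF c1 cong_mult[OF c2 c3]] .
    have c5: "[f a = r a * a j ^ b] (mod int p)" using fr a by blast
    have c6: "[C d a = r a * a j ^ b - r a * y ^ b] (mod int p)"
      unfolding C_def using cong_diff[OF c5 c4] .
    have "r a * y ^ b = r a * a j ^ b + (\<Sum>m\<in>{1..b}. T m a * int d ^ m)"
      unfolding y_def binom_split T_def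
      by (simp add: sum_distrib_left power_mult_distrib algebra_simps)
    then show ?thesis using c6 by simp
  qed
  have swap: "(\<Sum>d\<in>{1..<p}. int d ^ q * (- (\<Sum>m\<in>{1..b}. T m a * int d ^ m))) =
      - (\<Sum>m\<in>{1..b}. T m a * (\<Sum>d\<in>{1..<p}. int d ^ (q + m)))" for a
  proof -
    have "(\<Sum>d\<in>{1..<p}. int d ^ q * (- (\<Sum>m\<in>{1..b}. T m a * int d ^ m))) =
        - (\<Sum>d\<in>{1..<p}. \<Sum>m\<in>{1..b}. T m a * int d ^ (q + m))"
      by (simp add: sum_distrib_left sum_negf power_add algebra_simps)
    also have "\<dots> = - (\<Sum>m\<in>{1..b}. \<Sum>d\<in>{1..<p}. T m a * int d ^ (q + m))"
      by (subst sum.swap) simp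
    also have "\<dots> = - (\<Sum>m\<in>{1..b}. T m a * (\<Sum>d\<in>{1..<p}. int d ^ (q + m)))"
      by (simp add: sum_distrib_left)
    finally show ?thesis .
  qed
  have claim2: "[H a = T k a] (mod int p)" if a: "a \<in> F" for a
  proof -
    have "[H a = (\<Sum>d\<in>{1..<p}. int d ^ q * (- (\<Sum>m\<in>{1..b}. T m a * int d ^ m)))] (mod int p)"
      unfolding H_def by (intro cong_sum cong_mult cong_refl claim1[OF a])
    also have "(\<Sum>d\<in>{1..<p}. int d ^ q * (- (\<Sum>m\<in>{1..b}. T m a * int d ^ m))) =
      - (\<Sum>m\<in>{1..b}. T m a * (\<Sum>d\<in>{1..<p}. int d ^ (q + m)))" by (rule swap)
    also have "[- (\<Sum>m\<in>{1..b}. T m a * (\<Sum>d\<in>{1..<p}. int d ^ (q + m))) =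
        - (\<Sum>m\<in>{1..b}. T m a * (if (p - 1) dvd (q + m) then -1 else 0))] (mod int p)"
      by (intro cong_minus_minus_iff[THEN iffD2] cong_sum cong_mult cong_refl psum_int[OF pp])
    also have "(\<Sum>m\<in>{1..b}. T m a * (if (p - 1) dvd (q + m) then -1 else 0)) =
        (\<Sum>m\<in>{1..b}. (if m = k then - T m a else 0))"
    proof (rule sum.cong[OF refl])
      fix m assume m: "m \<in> {1..b}"
      have "(p - 1) dvd (q + m) \<longleftrightarrow> m = k"
      proof
        assume "(p - 1) dvd (q + m)"
        moreover have "q + m = (p - 1) + m - k" using k b q_def by simp
        moreover have "0 < q + m" "q + m < 2 * (p - 1)" using m k b q_def by auto
        ultimately have "q + m = p - 1"
        proof -
          assume dv: "(p - 1) dvd (q + m)" and _: "q + m = p - 1 + m - k"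
            and lo: "0 < q + m" and hi: "q + m < 2 * (p - 1)"
          obtain c where c: "q + m = (p - 1) * c" using dv by (elim dvdE)
          have "c \<noteq> 0" using c lo by (cases "c = 0") auto
          moreover have "\<not> c \<ge> 2"
          proof
            assume "c \<ge> 2"
            then have "(p - 1) * 2 \<le> (p - 1) * c" by (rule mult_le_mono2)
            then show False using c hi by linarith
          qed
          ultimately have "c = 1" by linarith
          then show ?thesis using c by simp
        qed
        then show "m = k" using m k b q_def by simp
      next
        assume "m = k"
        then show "(p - 1) dvd (q + m)" using k b q_def by simp
      qed
      then show "T m a * (if (p - 1) dvd (q + m) then -1 else 0) = (if m = k then - T m a else 0)"
        by simp
    qed
    also have "(\<Sum>m\<in>{1..b}. (if m = k then - T m a else 0)) = - T k a"
      using k by (simp add: sum.delta)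
    finally show ?thesis by simp
  qed
  have "b < p" using b p1 by linarith
  then have "\<not> p dvd (b choose k)" using choose_not_dvd[OF pp _ k(2)] by blast
  then have nd: "\<not> int p dvd int (b choose k)" by (metis int_dvd_int_iff)
  have "coprime (int (b choose k)) (int p)"
    using nd prime_imp_coprime[of "int p" "int (b choose k)"] pp by (simp add: coprime_commute)
  then obtain u where u: "[int (b choose k) * u = 1] (mod int p)" using cong_solve_coprime_int by blast
  have "R i (\<lambda>a. u * H a)" using HR by (rule R_smult)
  then show ?thesis
  proof (rule R_cong, intro ballI)
    fix a assume a: "a \<in> F"
    have "[u * H a = u * T k a] (mod int p)" using claim2[OF a] by (intro cong_mult cong_refl)
    also have "u * T k a = (int (b choose k) * u) * (r a * a j ^ (b - k) * g a ^ k)"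
      unfolding T_def by (simp add: algebra_simps)
    also have "[\<dots> = 1 * (r a * a j ^ (b - k) * g a ^ k)] (mod int p)" using u by (intro cong_mult cong_refl)
    finally show "[r a * a j ^ (b - k) * g a ^ k = u * H a] (mod int p)" by (simp add: cong_sym)
  qed
qed

end

context gctx begin

definition idx :: "nat \<Rightarrow> nat \<Rightarrow> nat" where "idx i l = (i + l) mod n"

lemma idx_lt: "idx i l < n" using n3 by (simp add: idx_def)

lemma N_idx: "N (idx i l) = idx i (Suc l)"
  unfolding N_def idx_def by (simp add: mod_Suc_eq)

lemma idx_0: "i < n \<Longrightarrow> idx i 0 = i" by (simp add: idx_def)

lemma idx_n: "i < n \<Longrightarrow> idx i n = i" by (simp add: idx_def)

lemma idx_inj: "i < n \<Longrightarrow> l < n \<Longrightarrow> m < n \<Longrightarrow> idx i l = idx i m \<Longrightarrow> l = m"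
proof -
  assume i: "i < n" and l: "l < n" and m: "m < n" and eq: "idx i l = idx i m"
  then have "[i + l = i + m] (mod n)" by (simp add: idx_def cong_def)
  then have "[l = m] (mod n)" by (simp add: cong_add_lcancel_nat)
  then show "l = m" using l m by (rule cong_less_modulus_unique_nat)
qed

lemma idx_neq: "i < n \<Longrightarrow> l < n \<Longrightarrow> m < n \<Longrightarrow> l \<noteq> m \<Longrightarrow> idx i l \<noteq> idx i m"
  using idx_inj by blast

lemma idx_ne_i: "i < n \<Longrightarrow> 0 < l \<Longrightarrow> l < n \<Longrightarrow> idx i l \<noteq> i"
  using idx_neq[of i l 0] idx_0 by auto

lemma indep_exact: "(\<And>a v. h (a(i := v)) = h a) \<Longrightarrow> indep i h"
  unfolding indep_def by simp

lemma indep_mono: "j \<noteq> i \<Longrightarrow> indep i (\<lambda>a. a j ^ c)"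
  by (rule indep_exact) simp

lemma indep_mono2: "j \<noteq> i \<Longrightarrow> k \<noteq> i \<Longrightarrow> indep i (\<lambda>a. a j ^ c * a k ^ d)"
  by (rule indep_exact) simp

lemma indep_const: "indep i (\<lambda>a. c)"
  by (rule indep_exact) simp

lemma e_range: "i < n \<Longrightarrow> 1 \<le> e i \<and> e i \<le> p - 1"
proof -
  assume i: "i < n"
  have "e i < p" using elt i by blast
  then have "e i \<le> p - 1" by linarith
  moreover have "1 \<le> e i" using e1 i by blast
  ultimately show ?thesis by blast
qed

definition PE :: "nat \<Rightarrow> nat \<Rightarrow> nat" where "PE i l = (\<Prod>m\<in>{1..<l}. e (idx i m))"

lemma PE_pos: "PE i l \<ge> 1"
  unfolding PE_def using e1 idx_lt by (intro prod_ge_1) (auto simp: Suc_le_eq)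

lemma PE_Suc: "1 \<le> l \<Longrightarrow> PE i (Suc l) = PE i l * e (idx i l)"
  unfolding PE_def by (simp add: prod.atLeastLessThan_Suc)

lemma prod_idx: "i < n \<Longrightarrow> (\<Prod>m<n. e (idx i m)) = (\<Prod>m<n. e m)"
proof -
  assume i: "i < n"
  have inj: "inj_on (idx i) {..<n}" using idx_inj[OF i] by (auto intro: inj_onI)
  have sub: "idx i ` {..<n} \<subseteq> {..<n}" using idx_lt by auto
  have img: "idx i ` {..<n} = {..<n}" using endo_inj_surj[OF _ sub inj] by simp
  have "(\<Prod>m<n. e m) = (\<Prod>m\<in>idx i ` {..<n}. e m)" using img by simp
  also have "\<dots> = (\<Prod>m<n. e (idx i m))" using inj by (simp add: prod.reindex)
  finally show ?thesis by simp
qed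

lemma e_PE: "i < n \<Longrightarrow> e i * PE i n = (\<Prod>m<n. e m)"
proof -
  assume i: "i < n"
  have "{..<n} = insert 0 {1..<n}" using n3 by auto
  then have "(\<Prod>m<n. e (idx i m)) = e (idx i 0) * (\<Prod>m\<in>{1..<n}. e (idx i m))" by simp
  then show ?thesis using prod_idx[OF i] idx_0[OF i] unfolding PE_def by simp
qed

lemma R_cong_eq: "R i h \<Longrightarrow> (\<And>a. a \<in> F \<Longrightarrow> h' a = h a) \<Longrightarrow> R i h'"
  by (rule R_cong) auto

lemma chain:
  assumes i: "i < n" and A: "1 \<le> A" "A \<le> p - 1"
    and start: "R i (\<lambda>a. a (idx i 1) ^ A)"
  shows "R i (\<lambda>a. a (idx i 1) ^ red p (A - 1 + (\<Prod>m<n. e m)))"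
proof -
  have ne1: "idx i 1 \<noteq> i" using idx_ne_i[OF i] n3 by simp
  have P: "R i (\<lambda>a. a (idx i 1) ^ (A - 1) * a (idx i (t + 2)) ^ PE i (t + 2))" if t: "t + 2 \<le> n - 1" for t
    using t
  proof (induction t)
    case 0
    have ne2: "idx i 2 \<noteq> i" using idx_ne_i[OF i] n3 by simp
    have g: "R (idx i 1) (\<lambda>a. a (idx i 2) ^ e (idx i 1))"
      using R_gen[OF idx_lt[of i 1]] by (simp add: N_idx numeral_2_eq_2)
    have "R i (\<lambda>a. (\<lambda>a. 1) a * a (idx i 1) ^ (A - 1) * (\<lambda>a. a (idx i 2) ^ e (idx i 1)) a ^ 1)"
      by (rule R_subst[OF i idx_lt ne1[symmetric] start _ A(1) A(2) _ A(1) indep_const indep_const g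
            indep_mono[OF ne2]]) simp_all
    moreover have "PE i 2 = e (idx i 1)" by (simp add: PE_def numeral_2_eq_2)
    ultimately show ?case by (simp add: numeral_2_eq_2)
  next
    case (Suc t)
    define l where "l = t + 2"
    have l: "2 \<le> l" "l + 1 \<le> n - 1" using Suc.prems unfolding l_def by linarith+
    have "t + 2 \<le> n - 1" using Suc.prems by linarith
    then have IH: "R i (\<lambda>a. a (idx i 1) ^ (A - 1) * a (idx i l) ^ PE i l)" unfolding l_def by (rule Suc.IH)
    have nel1: "idx i l \<noteq> idx i 1" using idx_neq[OF i, of l 1] l n3 by simp
    have nel: "idx i l \<noteq> i" using idx_ne_i[OF i, of l] l by simp
    have nel2: "idx i (Suc l) \<noteq> i" using idx_ne_i[OF i, of "Suc l"] l by simp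
    have g: "R (idx i l) (\<lambda>a. a (idx i (Suc l)) ^ e (idx i l))"
      using R_gen[OF idx_lt[of i l]] by (simp add: N_idx)
    define b where "b = red p (PE i l)"
    have b: "1 \<le> b" "b \<le> p - 1" using red_range[OF pp] b_def by auto
    have fr: "\<forall>a\<in>F. [a (idx i 1) ^ (A - 1) * a (idx i l) ^ PE i l = a (idx i 1) ^ (A - 1) * a (idx i l) ^ b] (mod int p)"
    proof
      fix a :: "nat \<Rightarrow> int"
      show "[a (idx i 1) ^ (A - 1) * a (idx i l) ^ PE i l = a (idx i 1) ^ (A - 1) * a (idx i l) ^ b] (mod int p)"
        unfolding b_def by (intro cong_mult cong_refl red_pow[OF pp PE_pos])
    qed
    have "R i (\<lambda>a. a (idx i 1) ^ (A - 1) * a (idx i l) ^ (b - b) * (a (idx i (Suc l)) ^ e (idx i l)) ^ b)"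
      by (rule R_subst[OF i idx_lt nel[symmetric] IH fr b b(1) order.refl
            indep_mono[OF nel1[symmetric]] indep_mono[OF ne1] g indep_mono[OF nel2]])
    then have "R i (\<lambda>a. a (idx i 1) ^ (A - 1) * a (idx i (Suc l)) ^ (e (idx i l) * PE i l))"
    proof (rule R_cong, intro ballI)
      fix a :: "nat \<Rightarrow> int"
      have "[(a (idx i (Suc l)) ^ e (idx i l)) ^ PE i l = (a (idx i (Suc l)) ^ e (idx i l)) ^ b] (mod int p)"
        unfolding b_def by (rule red_pow[OF pp PE_pos])
      then show "[a (idx i 1) ^ (A - 1) * a (idx i (Suc l)) ^ (e (idx i l) * PE i l) =
           a (idx i 1) ^ (A - 1) * a (idx i l) ^ (b - b) * (a (idx i (Suc l)) ^ e (idx i l)) ^ b] (mod int p)"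
        by (simp add: power_mult cong_scalar_left)
    qed
    moreover have "PE i (Suc l) = e (idx i l) * PE i l" using PE_Suc l by simp
    ultimately show ?case using l_def by (simp add: mult.commute)
  qed
  define i' where "i' = idx i (n - 1)"
  have i': "i' < n" using idx_lt i'_def by simp
  have Ni': "N i' = i" using N_idx i'_def idx_n[OF i] n3 by simp
  have i'ne: "i' \<noteq> i" using idx_ne_i[OF i, of "n - 1"] n3 i'_def by simp
  have i'ne1: "i' \<noteq> idx i 1" using idx_neq[OF i, of "n - 1" 1] n3 i'_def by simp
  have Q: "R i' (\<lambda>a. a (idx i 1) ^ (e i * e i'))"
  proof -
    have f: "R i' (\<lambda>a. a i ^ e i')" using R_gen[OF i'] Ni' by simp
    have g: "R i (\<lambda>a. a (idx i 1) ^ e i)" using R_gen[OF i] N_idx[of i 0] idx_0[OF i] by simp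
    have er: "1 \<le> e i'" "e i' \<le> p - 1" using e_range[OF i'] by auto
    have "R i' (\<lambda>a. (\<lambda>a. 1) a * a i ^ (e i' - e i') * (\<lambda>a. a (idx i 1) ^ e i) a ^ e i')"
      by (rule R_subst[OF i' i i'ne f _ er er(1) order.refl indep_const indep_const g
           indep_mono[OF i'ne1[symmetric]]]) simp
    then show ?thesis by (simp add: power_mult)
  qed
  have Pn: "R i (\<lambda>a. a (idx i 1) ^ (A - 1) * a i' ^ PE i (n - 1))"
  proof -
    have eq: "n - 3 + 2 = n - 1" using n3 by simp
    show ?thesis using P[of "n - 3", unfolded eq] unfolding i'_def by simp
  qed
  define b where "b = red p (PE i (n - 1))"
  have b: "1 \<le> b" "b \<le> p - 1" using red_range[OF pp] b_def by auto
  have fr: "\<forall>a\<in>F. [a (idx i 1) ^ (A - 1) * a i' ^ PE i (n - 1) = a (idx i 1) ^ (A - 1) * a i' ^ b] (mod int p)"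
  proof
    fix a :: "nat \<Rightarrow> int"
    show "[a (idx i 1) ^ (A - 1) * a i' ^ PE i (n - 1) = a (idx i 1) ^ (A - 1) * a i' ^ b] (mod int p)"
      unfolding b_def by (intro cong_mult cong_refl red_pow[OF pp PE_pos])
  qed
  have "R i (\<lambda>a. a (idx i 1) ^ (A - 1) * a i' ^ (b - b) * (a (idx i 1) ^ (e i * e i')) ^ b)"
    by (rule R_subst[OF i i' i'ne[symmetric] Pn fr b b(1) order.refl
          indep_mono[OF i'ne1[symmetric]] indep_mono[OF ne1] Q indep_mono[OF ne1]])
  then show ?thesis
  proof (rule R_cong, intro ballI)
    fix a :: "nat \<Rightarrow> int"
    define x where "x = a (idx i 1)"
    have E: "e i * PE i n = (\<Prod>m<n. e m)" using e_PE[OF i] .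
    have PEn: "PE i n = PE i (n - 1) * e i'" using PE_Suc[of "n - 1" i] n3 i'_def by simp
    have "[(x ^ (e i * e i')) ^ PE i (n - 1) = (x ^ (e i * e i')) ^ b] (mod int p)"
      unfolding b_def by (rule red_pow[OF pp PE_pos])
    then have c1: "[x ^ (A - 1) * x ^ (e i * e i' * PE i (n - 1)) = x ^ (A - 1) * a i' ^ (b - b) * (x ^ (e i * e i')) ^ b] (mod int p)"
      by (simp add: power_mult cong_scalar_left)
    have "e i * e i' * PE i (n - 1) = (\<Prod>m<n. e m)" using E PEn by (simp add: algebra_simps)
    then have eq: "x ^ (A - 1) * x ^ (e i * e i' * PE i (n - 1)) = x ^ (A - 1 + (\<Prod>m<n. e m))"
      by (simp add: power_add)
    have "1 \<le> e i * PE i n" using e_range[OF i] PE_pos by (simp add: one_le_mult_iff)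
    then have "1 \<le> A - 1 + (\<Prod>m<n. e m)" using E by linarith
    then have M: "[x ^ (A - 1 + (\<Prod>m<n. e m)) = x ^ red p (A - 1 + (\<Prod>m<n. e m))] (mod int p)"
      by (rule red_pow[OF pp])
    show "[a (idx i 1) ^ red p (A - 1 + (\<Prod>m<n. e m)) =
         a (idx i 1) ^ (A - 1) * a i' ^ (b - b) * (a (idx i 1) ^ (e i * e i')) ^ b] (mod int p)"
      using cong_trans[OF cong_sym[OF M] c1[unfolded eq]] unfolding x_def .
  qed
qed

end

lemma fermat1:
  assumes p: "prime p" and y: "\<not> int p dvd y"
  shows "[y ^ (p - 1) = 1] (mod int p)"
proof -
  have "[y ^ p = y] (mod int p)" by (rule fermat_int[OF p])
  moreover have "y ^ p = y * y ^ (p - 1)" using prime_gt_0_nat[OF p]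
    by (metis Suc_diff_1 power_Suc)
  ultimately have "int p dvd y * (y ^ (p - 1) - 1)"
    by (simp add: cong_iff_dvd_diff algebra_simps dvd_diff_commute)
  moreover have "prime (int p)" using p by simp
  ultimately have "int p dvd (y ^ (p - 1) - 1)" using y prime_dvd_mult_iff by blast
  then show ?thesis by (simp add: cong_iff_dvd_diff)
qed

lemma cong_range_eq:
  fixes x y q :: nat
  assumes "1 \<le> x" "x \<le> q" "1 \<le> y" "y \<le> q" "[x = y] (mod q)"
  shows "x = y"
proof -
  have "[(x - 1) + 1 = (y - 1) + 1] (mod q)" using assms by simp
  then have "[x - 1 = y - 1] (mod q)" by (rule cong_add_rcancel_nat[THEN iffD1])
  then have "x - 1 = y - 1" using assms by (intro cong_less_modulus_unique_nat) auto
  then show ?thesis using assms by linarith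
qed

context gctx begin

lemma mono_all:
  assumes i: "i < n" and E: "(\<Prod>m<n. e m) \<ge> 2"
    and H: "\<forall>x::int. 0 \<le> x \<and> x < int p \<and> [x ^ ((\<Prod>m<n. e m) - 1) = 1] (mod int p) \<longrightarrow> x = 1"
    and s: "1 \<le> s" "s \<le> p - 1"
  shows "R i (\<lambda>a. a (N i) ^ s)"
proof -
  define Et where "Et = (\<Prod>m<n. e m)"
  have cop: "coprime (Et - 1) (p - 1)" using coprime_from_hyp[OF pp] E H Et_def by blast
  define A where "A m = ((\<lambda>c. red p (c - 1 + Et)) ^^ m) (e i)" for m
  have ASuc: "A (Suc m) = red p (A m - 1 + Et)" for m unfolding A_def by simp
  have A0: "A 0 = e i" unfolding A_def by simp
  have Ni: "N i = idx i 1" using N_idx[of i 0] idx_0[OF i] by simp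
  have RA: "R i (\<lambda>a. a (idx i 1) ^ A m) \<and> 1 \<le> A m \<and> A m \<le> p - 1" for m
  proof (induction m)
    case 0
    have "R i (\<lambda>a. a (idx i 1) ^ e i)" using R_gen[OF i] Ni by simp
    then show ?case using A0 e_range[OF i] by simp
  next
    case (Suc m)
    then have "R i (\<lambda>a. a (idx i 1) ^ red p (A m - 1 + Et))" using chain[OF i] Et_def by blast
    then show ?case using ASuc red_range[OF pp] by simp
  qed
  have congA: "[A m = e i + m * (Et - 1)] (mod (p - 1))" for m
  proof (induction m)
    case 0 then show ?case using A0 by simp
  next
    case (Suc m)
    have Am: "1 \<le> A m" using RA by blast
    have Et1: "Et \<ge> 1" using E Et_def by simp
    have "1 \<le> A m - 1 + Et" using Am Et1 by linarith
    then have "[A (Suc m) = A m - 1 + Et] (mod (p - 1))" unfolding ASuc by (rule red_cong)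
    also have "A m - 1 + Et = A m + (Et - 1)" using Am Et1 by linarith
    also have "[A m + (Et - 1) = (e i + m * (Et - 1)) + (Et - 1)] (mod (p - 1))"
      using Suc.IH by (intro cong_add cong_refl)
    also have "(e i + m * (Et - 1)) + (Et - 1) = e i + Suc m * (Et - 1)" by simp
    finally show ?case .
  qed
  obtain x where x: "[(Et - 1) * x = Suc 0] (mod (p - 1))" using cong_solve_coprime_nat[OF cop] by blast
  define t where "t = s + (p - 1) * e i - e i"
  have p11: "p - 1 \<ge> 1" using p1 by linarith
  have "e i \<le> (p - 1) * e i" using p11 by simp
  then have t_eq: "e i + t = s + (p - 1) * e i" unfolding t_def by linarith
  define m where "m = x * t"
  have "[(Et - 1) * m = t] (mod (p - 1))"
  proof -
    have "[((Et - 1) * x) * t = Suc 0 * t] (mod (p - 1))" using x by (intro cong_mult cong_refl)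
    then show ?thesis unfolding m_def by (simp add: mult.assoc)
  qed
  then have "[e i + m * (Et - 1) = e i + t] (mod (p - 1))" by (intro cong_add cong_refl) (simp add: mult.commute)
  then have "[A m = e i + t] (mod (p - 1))" using congA[of m] by (metis cong_trans)
  also have "e i + t = s + (p - 1) * e i" by (rule t_eq)
  also have "[s + (p - 1) * e i = s + 0] (mod (p - 1))" by (intro cong_add cong_refl) (simp add: cong_0_iff)
  finally have "[A m = s] (mod (p - 1))" by simp
  then have "A m = s" using RA[of m] s by (intro cong_range_eq[of _ "p - 1"]) auto
  then show ?thesis using RA[of m] Ni by simp
qed

lemma delta:
  assumes i: "i < n" and v: "1 \<le> v" "v < int p"
    and mono: "\<forall>s. 1 \<le> s \<and> s \<le> p - 1 \<longrightarrow> R i (\<lambda>a. a (N i) ^ s)"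
  shows "R i (\<lambda>a. w * (if a (N i) = v then 1 else 0))"
proof -
  define h where "h a = - w * (\<Sum>s\<in>{1..p - 1}. of_nat ((p - 1) choose s) * (- v) ^ (p - 1 - s) * a (N i) ^ s)" for a
  have hR: "R i h" unfolding h_def
    by (intro R_smult R_sum) (auto intro: mono[rule_format] R_smult simp: i)
  show ?thesis
  proof (rule R_cong[OF hR], intro ballI)
    fix a assume a: "a \<in> F"
    define x where "x = a (N i)"
    have x: "0 \<le> x" "x < int p" using F_val[OF a] x_def by auto
    have bs: "(- v + x) ^ (p - 1) = (- v) ^ (p - 1) + (\<Sum>s\<in>{1..p - 1}. of_nat ((p - 1) choose s) * (- v) ^ (p - 1 - s) * x ^ s)"
      by (rule binom_split)
    have hx: "h a = - w * ((x - v) ^ (p - 1) - (- v) ^ (p - 1))"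
      unfolding h_def x_def[symmetric] using bs by simp
    have nv: "\<not> int p dvd (- v)"
    proof
      assume "int p dvd - v"
      moreover have "- v \<noteq> 0" using v by simp
      ultimately have "\<bar>int p\<bar> \<le> \<bar>- v\<bar>" by (intro dvd_imp_le_int)
      then show False using v by simp
    qed
    have fv: "[(- v) ^ (p - 1) = 1] (mod int p)" using fermat1[OF pp nv] .
    show "[w * (if a (N i) = v then 1 else 0) = h a] (mod int p)"
    proof (cases "x = v")
      case True
      have z: "[(x - v) ^ (p - 1) = 0] (mod int p)" using True p1 by (simp add: power_0_left)
      have "[h a = - w * (0 - 1)] (mod int p)" unfolding hx
        by (intro cong_mult cong_refl cong_diff z fv)
      then show ?thesis using True x_def by (simp add: cong_sym)
    next
      case False
      have nd: "\<not> int p dvd (x - v)"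
      proof
        assume "int p dvd (x - v)"
        moreover have "x - v \<noteq> 0" using False by simp
        ultimately have "\<bar>int p\<bar> \<le> \<bar>x - v\<bar>" by (intro dvd_imp_le_int)
        then show False using x v by simp
      qed
      have "[h a = - w * (1 - 1)] (mod int p)" unfolding hx
        by (intro cong_mult cong_refl cong_diff fv fermat1[OF pp nd])
      then show ?thesis using False x_def by (simp add: cong_sym)
    qed
  qed
qed

end

locale gctxb = gctx +
  assumes Ebig: "(\<Prod>m<n. e m) \<ge> 2"
    and Hyp: "\<forall>x::int. 0 \<le> x \<and> x < int p \<and> [x ^ ((\<Prod>m<n. e m) - 1) = 1] (mod int p) \<longrightarrow> x = 1"
begin

lemma Tmap:
  assumes i: "i < n" and v: "1 \<le> v" "v < int p"
  shows "\<exists>g\<in>G. \<forall>a\<in>F. g a = a(i := (a i + w * (if a (N i) = v then 1 else 0)) mod int p)"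
proof -
  have "\<forall>s. 1 \<le> s \<and> s \<le> p - 1 \<longrightarrow> R i (\<lambda>a. a (N i) ^ s)"
    using mono_all[OF i Ebig Hyp] by blast
  then have "R i (\<lambda>a. w * (if a (N i) = v then 1 else 0))" using delta[OF i v] by blast
  then show ?thesis unfolding R_def EE_def by blast
qed

definition u :: "nat \<Rightarrow> (nat \<Rightarrow> int)" where "u c = (\<lambda>j. if j = 0 then int c else 0)"

lemma u_F: "c < p \<Longrightarrow> u c \<in> F"
  unfolding u_def Fpn_def using n3 by auto

definition reach :: "nat \<Rightarrow> (nat \<Rightarrow> int) \<Rightarrow> (nat \<Rightarrow> int) \<Rightarrow> bool" where
  "reach m y z \<longleftrightarrow> (\<exists>h\<in>G. (\<forall>c\<in>{1..m}. h (u c) = u c) \<and> h y = z)"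

lemma reach_refl: "reach m y y"
  unfolding reach_def using Gact.Gact_id[of p n e] by (intro bexI[of _ id]) auto

lemma reach_trans: "reach m y z \<Longrightarrow> reach m z w \<Longrightarrow> reach m y w"
proof -
  assume "reach m y z" "reach m z w"
  then obtain h1 h2 where h1: "h1 \<in> G" "\<forall>c\<in>{1..m}. h1 (u c) = u c" "h1 y = z"
    and h2: "h2 \<in> G" "\<forall>c\<in>{1..m}. h2 (u c) = u c" "h2 z = w"
    unfolding reach_def by blast
  have "h2 \<circ> h1 \<in> G" using Gact_comp h1 h2 by blast
  then show ?thesis unfolding reach_def using h1 h2 by (intro bexI[of _ "h2 \<circ> h1"]) auto
qed

lemma N_Suc: "j + 1 < n \<Longrightarrow> N j = j + 1" by (simp add: N_def)
lemma N_last: "N (n - 1) = 0" using n3 by (simp add: N_def)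

lemma set_coord:
  assumes i: "i < n" and y: "y \<in> F" and m: "m < p - 1"
    and c1: "y (N i) \<noteq> 0" and c2: "N i = 0 \<longrightarrow> y 0 > int m"
    and t: "0 \<le> t" "t < int p"
  shows "reach m y (y(i := t))"
proof -
  define v where "v = y (N i)"
  have v: "1 \<le> v" "v < int p" using F_val[OF y, of "N i"] c1 v_def by auto
  obtain g where g: "g \<in> G" "\<forall>a\<in>F. g a = a(i := (a i + (t - y i) * (if a (N i) = v then 1 else 0)) mod int p)"
    using Tmap[OF i v] by blast
  have "g y = y(i := t)" using g y t v_def by simp
  moreover have "g (u c) = u c" if c: "c \<in> {1..m}" for c
  proof -
    have "c < p" using c m by auto
    then have cF: "u c \<in> F" by (rule u_F)
    have "u c (N i) \<noteq> v"
    proof (cases "N i = 0")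
      case True
      then show ?thesis using c c2 v_def u_def by auto
    next
      case False
      then show ?thesis using v u_def by auto
    qed
    then have "g (u c) = (u c)(i := u c i mod int p)" using g cF by simp
    also have "u c i mod int p = u c i" using F_val[OF cF, of i] by simp
    finally show ?thesis by simp
  qed
  ultimately show ?thesis unfolding reach_def using g by blast
qed

lemma B1:
  assumes m: "m < p - 1"
  shows "y \<in> F \<Longrightarrow> 1 \<le> l \<Longrightarrow> l \<le> n - 1 \<Longrightarrow> y l \<noteq> 0 \<Longrightarrow> \<exists>z\<in>F. reach m y z \<and> z 1 \<noteq> 0 \<and> z 0 = y 0"
proof (induction l arbitrary: y)
  case 0 then show ?case by simp
next
  case (Suc l)
  show ?case
  proof (cases "l = 0")
    case True
    then show ?thesis using Suc.prems reach_refl by auto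
  next
    case False
    have ln: "l < n" "l + 1 < n" using Suc.prems by auto
    have Nl: "N l = Suc l" using N_Suc[OF ln(2)] by simp
    define z1 where "z1 = y(l := 1)"
    have r1: "reach m y z1" unfolding z1_def
      by (rule set_coord[OF ln(1) Suc.prems(1) m]) (use Suc.prems Nl p1 in auto)
    have z1F: "z1 \<in> F" using F_upd[OF Suc.prems(1) ln(1)] p1 z1_def by simp
    have l1: "1 \<le> l" "l \<le> n - 1" using False ln by auto
    have z1l: "z1 l \<noteq> 0" by (simp add: z1_def)
    obtain z where z: "z \<in> F" "reach m z1 z" "z 1 \<noteq> 0" "z 0 = z1 0"
      using Suc.IH[OF z1F l1 z1l] by blast
    have "reach m y z" using reach_trans[OF r1 z(2)] .
    then show ?thesis using z(1,3,4) z1_def False by auto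
  qed
qed

lemma B3:
  assumes m: "m + 1 < p"
  shows "r \<le> n - 2 \<Longrightarrow> z \<in> F \<Longrightarrow> z 0 = int (m + 1) \<Longrightarrow> z 1 \<noteq> 0 \<Longrightarrow>
    \<exists>z'\<in>F. reach m z z' \<and> z' 0 = int (m + 1) \<and> z' 1 \<noteq> 0 \<and> (\<forall>j. n - r \<le> j \<and> j \<le> n - 1 \<longrightarrow> z' j \<noteq> 0)"
proof (induction r)
  case 0 then show ?case using reach_refl n3 by (intro bexI[of _ z]) auto
next
  case (Suc r)
  then obtain z1 where z1: "z1 \<in> F" "reach m z z1" "z1 0 = int (m + 1)" "z1 1 \<noteq> 0"
    "\<forall>j. n - r \<le> j \<and> j \<le> n - 1 \<longrightarrow> z1 j \<noteq> 0" by auto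
  define j where "j = n - Suc r"
  have j: "2 \<le> j" "j < n" using Suc.prems n3 j_def by auto
  have cond: "z1 (N j) \<noteq> 0 \<and> (N j = 0 \<longrightarrow> z1 0 > int m)"
  proof (cases "r = 0")
    case True
    then have "j = n - 1" using j_def by simp
    then have "N j = 0" using N_last by simp
    then show ?thesis using z1 by simp
  next
    case False
    then have "j + 1 < n" "j + 1 = n - r" using j_def Suc.prems by auto
    then have "N j = n - r" using N_Suc by simp
    then show ?thesis using z1(3) z1(5) False j by auto
  qed
  define z2 where "z2 = z1(j := 1)"
  have r2: "reach m z1 z2" unfolding z2_def
    by (rule set_coord[OF j(2) z1(1)]) (use m cond p1 in auto)
  have z2F: "z2 \<in> F" using F_upd[OF z1(1) j(2)] p1 z2_def by simp
  have "\<forall>j'. n - Suc r \<le> j' \<and> j' \<le> n - 1 \<longrightarrow> z2 j' \<noteq> 0"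
    using z1(5) j_def z2_def by (auto simp: Suc_diff_Suc le_Suc_eq)
  moreover have "z2 0 = int (m + 1)" "z2 1 \<noteq> 0" using z1 j z2_def by auto
  ultimately show ?case using z2F reach_trans[OF z1(2) r2] by blast
qed

lemma B4:
  assumes m: "m + 1 < p" and z: "z \<in> F" "z 0 = int (m + 1)" "\<forall>j. 1 \<le> j \<and> j \<le> n - 1 \<longrightarrow> z j \<noteq> 0"
  shows "k + 1 \<le> n \<Longrightarrow> \<exists>z'\<in>F. reach m z z' \<and> z' 0 = int (m + 1) \<and>
     (\<forall>j. 1 \<le> j \<and> j < k + 1 \<longrightarrow> z' j = 0) \<and> (\<forall>j. k + 1 \<le> j \<and> j \<le> n - 1 \<longrightarrow> z' j \<noteq> 0)"
proof (induction k)
  case 0 then show ?case using z reach_refl by auto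
next
  case (Suc k)
  then obtain z1 where z1: "z1 \<in> F" "reach m z z1" "z1 0 = int (m + 1)"
    "\<forall>j. 1 \<le> j \<and> j < k + 1 \<longrightarrow> z1 j = 0" "\<forall>j. k + 1 \<le> j \<and> j \<le> n - 1 \<longrightarrow> z1 j \<noteq> 0" by auto
  define r where "r = k + 1"
  have r: "r < n" "1 \<le> r" using Suc.prems r_def by auto
  have cond: "z1 (N r) \<noteq> 0 \<and> (N r = 0 \<longrightarrow> z1 0 > int m)"
  proof (cases "r + 1 < n")
    case True
    then have "N r = r + 1" using N_Suc by simp
    then show ?thesis using z1(5) True r_def by auto
  next
    case False
    then have "r = n - 1" using r by simp
    then have "N r = 0" using N_last by simp
    then show ?thesis using z1 by simp
  qed
  define z2 where "z2 = z1(r := 0)"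
  have r2: "reach m z1 z2" unfolding z2_def
    by (rule set_coord[OF r(1) z1(1)]) (use m cond p1 in auto)
  have z2F: "z2 \<in> F" using F_upd[OF z1(1) r(1)] p1 z2_def by simp
  have "\<forall>j. 1 \<le> j \<and> j < Suc k + 1 \<longrightarrow> z2 j = 0" using z1(4) z2_def r_def by auto
  moreover have "\<forall>j. Suc k + 1 \<le> j \<and> j \<le> n - 1 \<longrightarrow> z2 j \<noteq> 0" using z1(5) z2_def r_def by auto
  moreover have "z2 0 = int (m + 1)" using z1 r z2_def by auto
  ultimately show ?case using z2F reach_trans[OF z1(2) r2] by blast
qed

lemma move:
  assumes m: "m + 1 < p" and y: "y \<in> F" "y \<noteq> zeroPt" and yS: "\<forall>c\<in>{1..m}. y \<noteq> u c"
  shows "reach m y (u (m + 1))"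
proof -
  have m': "m < p - 1" using m by simp
  obtain z where z: "z \<in> F" "reach m y z" "z 1 \<noteq> 0"
  proof (cases "\<exists>l. 1 \<le> l \<and> l \<le> n - 1 \<and> y l \<noteq> 0")
    case True
    then obtain l where "1 \<le> l" "l \<le> n - 1" "y l \<noteq> 0" by blast
    then show ?thesis using B1[OF m' y(1)] that by blast
  next
    case False
    then have yz: "y j = 0" if "j \<noteq> 0" for j
      using that y(1) unfolding Fpn_def by (cases "j < n") auto
    have y0: "y 0 \<noteq> 0"
    proof
      assume "y 0 = 0"
      then have "y = zeroPt" unfolding zeroPt_def
      proof -
        assume y00: "y 0 = 0"
        show "y = (\<lambda>_. 0)"
        proof
          fix j show "y j = 0" using yz y00 by (cases "j = 0") auto
        qed
      qed
      then show False using y(2) by simp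
    qed
    have y0r: "0 \<le> y 0" "y 0 < int p" using F_val[OF y(1)] by auto
    have "y 0 > int m"
    proof (rule ccontr)
      assume "\<not> y 0 > int m"
      then have c: "nat (y 0) \<in> {1..m}" using y0 y0r by auto
      have "y = u (nat (y 0))" using yz y0r unfolding u_def by (auto simp: fun_eq_iff)
      then show False using yS c by blast
    qed
    then have cond: "y (N (n - 1)) \<noteq> 0 \<and> (N (n - 1) = 0 \<longrightarrow> y 0 > int m)" using N_last y0 by simp
    define z1 where "z1 = y(n - 1 := 1)"
    have nn: "n - 1 < n" using n3 by simp
    have r1: "reach m y z1" unfolding z1_def
      by (rule set_coord[OF nn y(1) m']) (use cond p1 in auto)
    have z1F: "z1 \<in> F" using F_upd[OF y(1) nn] p1 z1_def by simp
    have z1n: "z1 (n - 1) \<noteq> 0" using z1_def by simp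
    have n11: "1 \<le> n - 1" using n3 by simp
    obtain z where "z \<in> F" "reach m z1 z" "z 1 \<noteq> 0" using B1[OF m' z1F n11 order.refl z1n] by blast
    then show ?thesis using that reach_trans[OF r1] by blast
  qed
  define z2 where "z2 = z(0 := int (m + 1))"
  have N0: "N 0 = 1" using N_Suc[of 0] n3 by simp
  have r2: "reach m z z2" unfolding z2_def
    by (rule set_coord) (use z m N0 n3 in auto)
  have z2F: "z2 \<in> F" using F_upd[OF z(1), of 0] m n3 z2_def by simp
  have z20: "z2 0 = int (m + 1)" "z2 1 \<noteq> 0" using z z2_def by auto
  obtain z3 where z3: "z3 \<in> F" "reach m z2 z3" "z3 0 = int (m + 1)" "z3 1 \<noteq> 0"
    "\<forall>j. n - (n - 2) \<le> j \<and> j \<le> n - 1 \<longrightarrow> z3 j \<noteq> 0"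
    using B3[OF m, of "n - 2", OF _ z2F z20] by auto
  have z3a: "\<forall>j. 1 \<le> j \<and> j \<le> n - 1 \<longrightarrow> z3 j \<noteq> 0"
  proof (intro allI impI)
    fix j assume j: "1 \<le> j \<and> j \<le> n - 1"
    show "z3 j \<noteq> 0"
    proof (cases "j = 1")
      case True then show ?thesis using z3 by simp
    next
      case False then show ?thesis using z3(5) j n3 by auto
    qed
  qed
  obtain z4 where z4: "z4 \<in> F" "reach m z3 z4" "z4 0 = int (m + 1)"
    "\<forall>j. 1 \<le> j \<and> j < n - 1 + 1 \<longrightarrow> z4 j = 0"
    using B4[OF m z3(1) z3(3) z3a, of "n - 1"] n3 by auto
  have "z4 = u (m + 1)"
  proof
    fix j
    show "z4 j = u (m + 1) j"
    proof (cases "j = 0")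
      case True then show ?thesis using z4 u_def by simp
    next
      case False
      show ?thesis
      proof (cases "j < n")
        case True then show ?thesis using z4(4) False u_def n3 by auto
      next
        case False then show ?thesis using z4(1) \<open>j \<noteq> 0\<close> u_def unfolding Fpn_def by auto
      qed
    qed
  qed
  then show ?thesis using z(2) r2 z3(2) z4(2) reach_trans by metis
qed

end

context gctxb begin

lemma zero_F: "zeroPt \<in> F" unfolding zeroPt_def Fpn_def using p0 by auto

lemma Gact_inj: "g \<in> G \<Longrightarrow> a \<in> F \<Longrightarrow> b \<in> F \<Longrightarrow> g a = g b \<Longrightarrow> a = b"
  using Gact_inv_ex by metis

lemma std:
  "length xs \<le> p - 1 \<Longrightarrow> distinct xs \<Longrightarrow> set xs \<subseteq> F - {zeroPt} \<Longrightarrow>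
    \<exists>g\<in>G. map g xs = map u [1..<length xs + 1]"
proof (induction xs rule: rev_induct)
  case Nil then show ?case using Gact.Gact_id[of p n e] by auto
next
  case (snoc y ys)
  define k where "k = length ys"
  have k: "k + 1 \<le> p - 1" using snoc.prems k_def by simp
  obtain g0 where g0: "g0 \<in> G" "map g0 ys = map u [1..<k + 1]"
    using snoc.IH snoc.prems k_def by auto
  have yF: "y \<in> F" "y \<noteq> zeroPt" using snoc.prems by auto
  have ysF: "set ys \<subseteq> F" using snoc.prems by auto
  have yns: "y \<notin> set ys" using snoc.prems by simp
  define y' where "y' = g0 y"
  have y'F: "y' \<in> F" using Gact_F[OF g0(1) yF(1)] y'_def by simp
  have y'0: "y' \<noteq> zeroPt"
  proof
    assume "y' = zeroPt"
    then have "g0 y = g0 zeroPt" using Gact_zero[OF g0(1)] y'_def by simp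
    then have "y = zeroPt" using Gact_inj[OF g0(1) yF(1) zero_F] by simp
    then show False using yF by simp
  qed
  have y'S: "\<forall>c\<in>{1..k}. y' \<noteq> u c"
  proof
    fix c assume c: "c \<in> {1..k}"
    have "c - 1 < k" using c by auto
    have len: "c - 1 < length [1..<k + 1]" using \<open>c - 1 < k\<close> by simp
    have nu: "[1..<k + 1] ! (c - 1) = 1 + (c - 1)" using \<open>c - 1 < k\<close> by (intro nth_upt) simp
    have "(map u [1..<k + 1]) ! (c - 1) = u ([1..<k + 1] ! (c - 1))" using len by (rule nth_map)
    then have "u c = (map u [1..<k + 1]) ! (c - 1)" using nu c by simp
    also have "\<dots> = (map g0 ys) ! (c - 1)" using g0 by simp
    also have "\<dots> = g0 (ys ! (c - 1))" using \<open>c - 1 < k\<close> k_def by simp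
    finally have uc: "u c = g0 (ys ! (c - 1))" .
    have inys: "ys ! (c - 1) \<in> set ys" using \<open>c - 1 < k\<close> k_def by simp
    show "y' \<noteq> u c"
    proof
      assume "y' = u c"
      then have "g0 y = g0 (ys ! (c - 1))" using uc y'_def by simp
      then have "y = ys ! (c - 1)" using Gact_inj[OF g0(1) yF(1)] inys ysF by blast
      then show False using yns inys by simp
    qed
  qed
  have "k + 1 < p" using k p1 by linarith
  then have "reach k y' (u (k + 1))" using move y'F y'0 y'S by blast
  then obtain h where h: "h \<in> G" "\<forall>c\<in>{1..k}. h (u c) = u c" "h y' = u (k + 1)"
    unfolding reach_def by blast
  have hg: "h \<circ> g0 \<in> G" using Gact_comp h g0 by blast
  have "map (h \<circ> g0) (ys @ [y]) = map h (map g0 ys) @ [h y']" using y'_def by simp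
  also have "\<dots> = map h (map u [1..<k + 1]) @ [u (k + 1)]" using g0 h by simp
  also have "map h (map u [1..<k + 1]) = map u [1..<k + 1]" using h(2) by (auto intro: map_idI)
  also have "map u [1..<k + 1] @ [u (k + 1)] = map u [1..<length (ys @ [y]) + 1]" using k_def by simp
  finally show ?case using hg by blast
qed

lemma ktrans: "k_transitive_on (p - 1) G (F - {zeroPt})"
  unfolding k_transitive_on_def
proof (intro allI impI)
  fix xs ys :: "(nat \<Rightarrow> int) list"
  assume a: "length xs = p - 1 \<and> length ys = p - 1 \<and> distinct xs \<and> distinct ys \<and>
    set xs \<subseteq> F - {zeroPt} \<and> set ys \<subseteq> F - {zeroPt}"
  obtain gx where gx: "gx \<in> G" "map gx xs = map u [1..<p - 1 + 1]" using std[of xs] a by auto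
  obtain gy where gy: "gy \<in> G" "map gy ys = map u [1..<p - 1 + 1]" using std[of ys] a by auto
  obtain gy' where gy': "gy' \<in> G" "\<forall>a\<in>F. gy' (gy a) = a" using Gact_inv_ex[OF gy(1)] by blast
  have "gy' \<circ> gx \<in> G" using Gact_comp gy' gx by blast
  moreover have "map (gy' \<circ> gx) xs = ys"
  proof -
    have "map (gy' \<circ> gx) xs = map gy' (map gx xs)" by (rule map_map[symmetric])
    also have "\<dots> = map gy' (map gy ys)" by (simp only: gx(2) gy(2))
    also have "\<dots> = map (gy' \<circ> gy) ys" by simp
    also have "\<dots> = ys" using gy'(2) a by (intro map_idI) auto
    finally show ?thesis .
  qed
  ultimately show "\<exists>g\<in>G. map g xs = ys" by blast
qed

end

theorem mainTheorem11:
  fixes p n :: nat and e :: "nat \<Rightarrow> nat"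
  assumes "n \<ge> 3"
    and "\<forall>i<n. e i \<ge> 1"
    and "(\<Prod>i<n. e i) \<ge> 2"
    and "prime p"
    and "\<forall>i<n. e i < p"
    and "\<forall>x::int. 0 \<le> x \<and> x < int p \<and> [x ^ ((\<Prod>i<n. e i) - 1) = 1] (mod int p) \<longrightarrow> x = 1"
  shows "(\<forall>g\<in>Gact p n e. g zeroPt = zeroPt)
    \<and> k_transitive_on (p - 1) (Gact p n e) (Fpn p n - {zeroPt})"
proof -
  interpret gctxb p n e
    using assms by unfold_locales auto
  show ?thesis using Gact_zero ktrans by blast
qed

end
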